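(* Let $n,m\in\mathbb{N}_0$ with $m\geq n-1$. Then $L_n^{(m)}(x)>0$ for all $x\in[0,1)$. Moreover $L_n^{(m)}(1)>0$ as well, provided $(n,m)\neq(1,0)$.
   Context: Generalized Laguerre polynomials: $L_n^{(\alpha)}(x)=\sum_{j=0}^n(-1)^j\binom{n+\alpha}{n-j}\frac{x^j}{j!}$. *)

theory Defs
  imports Complex_Main
begin

definition laguerre :: "nat \<Rightarrow> real \<Rightarrow> real \<Rightarrow> real" where
  "laguerre n \<alpha> x = (\<Sum>j=0..n. (-1)^j * ((real n + \<alpha>) gchoose (n - j)) * x^j / fact j)"

end

theory Submission
  imports Defs
begin

lemma choose_rel: "k < N \<Longrightarrow> (N choose Suc k) * Suc k = (N choose k) * (N - k)"
  by (metis binomial_absorb_comp binomial_absorption mult.commute)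

lemma alt_step:
  "(\<Sum>j<Suc N. (-1)^j * a (j+k)) = (a k :: real) - (\<Sum>j<N. (-1)^j * a (j + Suc k))"
  apply (subst sum.lessThan_Suc_shift)
  apply (simp add: sum_negf[symmetric])
  done

lemma alt_bounds:
  fixes a :: "nat \<Rightarrow> real"
  assumes "\<And>j. a (Suc j) \<le> a j" "\<And>j. 0 \<le> a j"
  shows "0 \<le> (\<Sum>j<N. (-1)^j * a (j+k)) \<and> (\<Sum>j<N. (-1)^j * a (j+k)) \<le> a k"
proof (induction N arbitrary: k)
  case 0
  then show ?case using assms(2) by simp
next
  case (Suc N)
  have "0 \<le> (\<Sum>j<N. (-1)^j * a (j + Suc k)) \<and> (\<Sum>j<N. (-1)^j * a (j + Suc k)) \<le> a (Suc k)"
    using Suc.IH by blast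
  then show ?case unfolding alt_step using assms[of k] by linarith
qed

lemma ratio:
  fixes n m j :: nat and x :: real
  assumes "j < n"
  defines "t \<equiv> \<lambda>j. if j \<le> n then real ((n+m) choose (n-j)) * x^j / fact j else 0"
  shows "t (Suc j) * (real (m+j+1) * real (j+1)) = t j * x * real (n-j)"
proof -
  have k: "n - Suc j < n + m" using assms by simp
  have c: "((n+m) choose (n - j)) * (n - j) = ((n+m) choose (n - Suc j)) * (m + j + 1)"
    using choose_rel[OF k] assms by (simp add: Suc_diff_Suc)
  hence c': "real ((n+m) choose (n - j)) * real (n - j) = real ((n+m) choose (n - Suc j)) * real (m + j + 1)"
    by (metis of_nat_mult)
  have "t (Suc j) * (real (m+j+1) * real (j+1))
      = real ((n+m) choose (n - Suc j)) * real (m + j + 1) * x^(Suc j) * real (j+1) / fact (Suc j)"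
    using assms by (simp add: t_def)
  also have "\<dots> = real ((n+m) choose (n - j)) * real (n - j) * x^(Suc j) / fact j"
    unfolding c'[symmetric]
  proof -
    have "fact (Suc j) = real (j+1) * (fact j :: real)" by simp
    then show "real ((n+m) choose (n - j)) * real (n - j) * x^(Suc j) * real (j+1) / fact (Suc j)
      = real ((n+m) choose (n - j)) * real (n - j) * x^(Suc j) / fact j" by simp
  qed
  also have "\<dots> = t j * x * real (n-j)"
    using assms by (simp add: t_def field_simps)
  finally show ?thesis .
qed

theorem proposition1:
  fixes n m :: nat
  assumes "m + 1 \<ge> n"
  shows "(\<forall>x::real. 0 \<le> x \<and> x < 1 \<longrightarrow> laguerre n (real m) x > 0)
         \<and> ((n, m) \<noteq> (1, 0) \<longrightarrow> laguerre n (real m) 1 > 0)"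
proof -
  have main: "laguerre n (real m) x > 0"
    if x0: "0 \<le> x" and x1: "x \<le> 1" and ex: "x < 1 \<or> (n, m) \<noteq> (1, 0)" for x :: real
  proof -
    define t where "t = (\<lambda>j. if j \<le> n then real ((n+m) choose (n-j)) * x^j / fact j else 0)"
    have tnn: "0 \<le> t j" for j using x0 by (simp add: t_def)
    have tpos: "0 < t j" if "j \<le> n" "0 < x \<or> j = 0" for j
      using that x0 by (auto simp: t_def)
    have rel: "t (Suc j) * (real (m+j+1) * real (j+1)) = t j * x * real (n-j)" if "j < n" for j
      using ratio[OF that, of m x] by (simp add: t_def)
    have mono: "t (Suc j) \<le> t j" for j
    proof (cases "j < n")
      case True
      have p: "0 < real (m+j+1) * real (j+1)" by simp
      have "t j * x * real (n-j) \<le> t j * 1 * (real (m+j+1) * real (j+1))"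
      proof (rule mult_mono)
        show "t j * x \<le> t j * 1" using x1 tnn[of j] by (simp add: mult_left_le)
        have "real (n - j) \<le> real (m+j+1)" using assms by simp
        also have "\<dots> \<le> real (m+j+1) * real (j+1)" by simp
        finally show "real (n - j) \<le> real (m+j+1) * real (j+1)" .
      qed (use tnn[of j] in auto)
      then show ?thesis using rel[OF True] p
        by (metis mult.right_neutral mult_le_cancel_right_pos)
    next
      case False
      then show ?thesis using tnn[of j] by (simp add: t_def)
    qed
    have strict: "t (Suc j) < t j" if "j < n" "x < 1 \<or> 1 \<le> j" "0 < x \<or> j = 0" for j
    proof -
      have p: "0 < real (m+j+1) * real (j+1)" by simp
      have tj: "0 < t j" using tpos[of j] that x0 by (cases "x = 0") (auto simp: t_def)
      have "real (n - j) \<le> real (m+j+1) * real (j+1)"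
      proof -
        have "real (n - j) \<le> real (m+j+1)" using assms by simp
        also have "\<dots> \<le> real (m+j+1) * real (j+1)" by simp
        finally show ?thesis .
      qed
      moreover have "x < 1 \<or> real (n - j) < real (m+j+1) * real (j+1)"
      proof (cases "x < 1")
        case False
        then have "1 \<le> j" using that by auto
        have a1: "real (n - j) \<le> real m" using assms \<open>1 \<le> j\<close> by simp
        have a2: "0 \<le> real (m+j+1) * real j" by simp
        have "real (n - j) < real (m+j+1) + real (m+j+1) * real j"
          using a1 a2 of_nat_0_le_iff[of m] of_nat_0_le_iff[of j] by (simp only: of_nat_add of_nat_1)
        then show ?thesis by (simp add: algebra_simps)
      qed simp
      ultimately have "t j * x * real (n-j) < t j * 1 * (real (m+j+1) * real (j+1))"
      proof (elim disjE)
        assume xl: "x < 1" and D: "real (n - j) \<le> real (m+j+1) * real (j+1)"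
        have "t j * x * real (n-j) \<le> t j * x * (real (m+j+1) * real (j+1))"
          using D tj x0 by (intro mult_left_mono) auto
        also have "\<dots> < t j * 1 * (real (m+j+1) * real (j+1))"
          using xl tj p by (intro mult_strict_right_mono mult_strict_left_mono) auto
        finally show ?thesis .
      next
        assume D: "real (n - j) < real (m+j+1) * real (j+1)"
        have "t j * x * real (n-j) \<le> t j * 1 * real (n-j)"
          using x1 tj by (intro mult_right_mono mult_left_mono) auto
        also have "\<dots> < t j * 1 * (real (m+j+1) * real (j+1))"
          using D tj by simp
        finally show ?thesis .
      qed
      then show ?thesis using rel[OF that(1)] p
        by (metis mult.right_neutral mult_less_cancel_right_pos)
    qed
    have g: "(real n + real m) gchoose k = real ((n+m) choose k)" for k
      by (metis binomial_gbinomial of_nat_add)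
    have L: "laguerre n (real m) x = (\<Sum>j<Suc n. (-1)^j * t (j+0))"
      unfolding laguerre_def t_def
      by (simp add: atLeast0AtMost lessThan_Suc_atMost g mult.assoc)
    note B = alt_bounds[of t, OF mono tnn]
    show ?thesis
    proof (cases n)
      case 0
      then show ?thesis using L tpos[of 0] by simp
    next
      case (Suc n1)
      have s1: "(\<Sum>j<Suc n. (-1)^j * t (j+0)) = t 0 - (\<Sum>j<n. (-1)^j * t (j + 1))"
        using alt_step[where N=n and a=t and k=0] by simp
      show ?thesis
      proof (cases "x < 1 \<or> n \<noteq> m + 1")
        case True
        have "t 1 < t 0"
        proof (cases "x < 1")
          case True then show ?thesis using strict[of 0] Suc by simp
        next
          case False
          then have xe: "x = 1" "n \<noteq> m+1" using True x1 by auto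
          have "t 1 * (real (m+1)) = t 0 * real n" using rel[of 0] Suc xe by simp
          moreover have "real n < real (m+1)" using xe assms by simp
          moreover have "0 < t 0" using tpos[of 0] by simp
          ultimately have "t 1 * real (m+1) < t 0 * real (m+1)"
            by (metis mult_strict_left_mono mult.commute)
          then show ?thesis
            by (metis mult_less_cancel_right_pos of_nat_0_less_iff zero_less_Suc Suc_eq_plus1)
        qed
        moreover have "(\<Sum>j<n. (-1)^j * t (j + 1)) \<le> t 1" using conjunct2[OF B[where N=n and k=1]] by simp
        ultimately show ?thesis using L s1 by simp
      next
        case False
        then have xe: "x = 1" "n = m + 1" using x1 by auto
        then have "n1 \<noteq> 0" using ex Suc by auto
        then obtain n2 where n2: "n1 = Suc n2" by (cases n1) auto
        have t10: "t 1 = t 0" using rel[of 0] Suc xe by simp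
        have s2: "(\<Sum>j<n. (-1)^j * t (j + 1)) = t 1 - (\<Sum>j<n1. (-1)^j * t (j + 2))"
          using alt_step[where N=n1 and a=t and k=1] Suc by (simp add: numeral_2_eq_2)
        have s3: "(\<Sum>j<n1. (-1)^j * t (j + 2)) = t 2 - (\<Sum>j<n2. (-1)^j * t (j + 3))"
          using alt_step[where N=n2 and a=t and k=2] n2 by (simp add: numeral_3_eq_3 numeral_2_eq_2)
        have "t 2 > 0" using tpos[of 2] xe n2 Suc by simp
        have "t 3 < t 2"
        proof (cases "2 < n")
          case True then show ?thesis using strict[of 2] xe by simp
        next
          case False then show ?thesis using \<open>t 2 > 0\<close> by (simp add: t_def)
        qed
        moreover have "(\<Sum>j<n2. (-1)^j * t (j + 3)) \<le> t 3" using conjunct2[OF B[where N=n2 and k=3]] by simp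
        ultimately show ?thesis using L s1 s2 s3 t10 by simp
      qed
    qed
  qed
  show ?thesis using main by auto
qed

end
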